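(* Without the moment bound constraint $\int\|\mathbf{x}\|_2^d\,\mathrm{d}\mu\le M$, an optimization problem of option-pricing type over probability measures need not attain its optimal value. Specifically, for real numbers $0 \le k_1 < k_2$ and $a > 0$, the problem \[ p^\ast = \inf\Big\{\int_0^\infty \max(0,x-k_1)\,\mathrm{d}\mu(x) \;:\; \mu \text{ a Borel probability measure on } [0,\infty),\ \int_0^\infty \max(0,x-k_2)\,\mathrm{d}\mu(x) = a\Big\} \] is feasible, but there is no feasible probability measure $\mu$ attaining the infimum $p^\ast$. *)

theory Defs
  imports "HOL-Probability.Probability"
begin

definition borel_prob_nonneg :: "real measure \<Rightarrow> bool" where
  "borel_prob_nonneg \<mu> \<longleftrightarrow> prob_space \<mu> \<and> sets \<mu> = sets (restrict_space borel {0..})"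

definition opt_feasible :: "real \<Rightarrow> real \<Rightarrow> real measure \<Rightarrow> bool" where
  "opt_feasible k2 a \<mu> \<longleftrightarrow> borel_prob_nonneg \<mu> \<and>
     (\<integral>\<^sup>+ x. ennreal (max 0 (x - k2)) \<partial>\<mu>) = ennreal a"

definition opt_cost :: "real \<Rightarrow> real measure \<Rightarrow> ennreal" where
  "opt_cost k1 \<mu> = (\<integral>\<^sup>+ x. ennreal (max 0 (x - k1)) \<partial>\<mu>)"

end

theory Submission
  imports Defs
begin

definition twopt :: "real \<Rightarrow> real \<Rightarrow> real \<Rightarrow> real measure" where
  "twopt k2 a p = distr (measure_pmf (bernoulli_pmf p)) (restrict_space borel {0..})
      (\<lambda>b. if b then k2 + a / p else 0)"

lemma twopt_int:
  assumes "0 < p" "p \<le> 1" "\<And>x. 0 \<le> f x" "0 \<le> k2" "0 \<le> a" "f \<in> borel_measurable borel"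
  shows "(\<integral>\<^sup>+ x. ennreal (f x) \<partial>twopt k2 a p) =
         ennreal (f (k2 + a / p) * p + f 0 * (1 - p))"
proof -
  have m1: "(\<lambda>b. if b then k2 + a / p else 0) \<in> measurable (measure_pmf (bernoulli_pmf p)) (restrict_space borel {0..})"
    using assms by (auto simp: space_restrict_space)
  have m2: "(\<lambda>x. ennreal (f x)) \<in> borel_measurable (restrict_space borel {0..})"
    using assms(6) by (intro measurable_restrict_space1) auto
  have m3: "(\<lambda>x. ennreal (f x)) \<in> borel_measurable (distr (measure_pmf (bernoulli_pmf p)) (restrict_space borel {0..}) (\<lambda>b. if b then k2 + a / p else 0))"
    using m2 by simp
  show ?thesis
    unfolding twopt_def nn_integral_distr[OF m1 m3]
    using assms by (simp add: ennreal_mult ennreal_plus[symmetric])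
qed

lemma twopt_bp:
  assumes "0 < p" "p \<le> 1" "0 \<le> k2" "0 \<le> a"
  shows "borel_prob_nonneg (twopt k2 a p)"
  unfolding borel_prob_nonneg_def twopt_def
proof
  show "prob_space (distr (measure_pmf (bernoulli_pmf p)) (restrict_space borel {0..}) (\<lambda>b. if b then k2 + a / p else 0))"
    using assms by (intro prob_space.prob_space_distr prob_space_measure_pmf) (auto simp: space_restrict_space)
qed simp

lemma twopt_feas:
  assumes "0 < p" "p \<le> 1" "0 \<le> k2" "0 < a"
  shows "opt_feasible k2 a (twopt k2 a p)"
  unfolding opt_feasible_def
proof
  show "borel_prob_nonneg (twopt k2 a p)" using twopt_bp assms by auto
  have "(\<integral>\<^sup>+ x. ennreal (max 0 (x - k2)) \<partial>twopt k2 a p) =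
       ennreal (max 0 (k2 + a / p - k2) * p + max 0 (0 - k2) * (1 - p))"
    using assms by (intro twopt_int) auto
  also have "\<dots> = ennreal a" using assms by (simp add: max_def)
  finally show "(\<integral>\<^sup>+ x. ennreal (max 0 (x - k2)) \<partial>twopt k2 a p) = ennreal a" .
qed

lemma twopt_cost:
  assumes "0 < p" "p \<le> 1" "0 \<le> k1" "k1 < k2" "0 < a"
  shows "opt_cost k1 (twopt k2 a p) = ennreal (a + p * (k2 - k1))"
proof -
  have "opt_cost k1 (twopt k2 a p) =
       ennreal (max 0 (k2 + a / p - k1) * p + max 0 (0 - k1) * (1 - p))"
    unfolding opt_cost_def using assms by (intro twopt_int) auto
  also have "\<dots> = ennreal (a + p * (k2 - k1))"
  proof -
    have "k2 + a / p - k1 \<ge> 0" using assms by (smt (verit) divide_pos_pos)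
    then show ?thesis using assms by (simp add: max_def algebra_simps)
  qed
  finally show ?thesis .
qed

lemma feas_cost_gt:
  assumes "0 \<le> k1" "k1 < k2" "0 < a" "opt_feasible k2 a \<mu>"
  shows "ennreal a < opt_cost k1 \<mu>"
proof -
  have bp: "borel_prob_nonneg \<mu>" and fe: "(\<integral>\<^sup>+ x. ennreal (max 0 (x - k2)) \<partial>\<mu>) = ennreal a"
    using assms(4) unfolding opt_feasible_def by auto
  have ss: "sets \<mu> = sets (restrict_space borel {0..})" using bp unfolding borel_prob_nonneg_def by auto
  have meas: "(\<lambda>x. ennreal (f x)) \<in> borel_measurable \<mu>" if "f \<in> borel_measurable borel" for f :: "real \<Rightarrow> real"
  proof -
    have "(\<lambda>x. ennreal (f x)) \<in> borel_measurable (restrict_space borel {0..})"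
      using that by (intro measurable_restrict_space1) auto
    then show ?thesis using measurable_cong_sets[OF ss refl, of "borel :: ennreal measure"] by blast
  qed
  define g where "g x = max 0 (x - k1) - max 0 (x - k2)" for x :: real
  have g0: "g x \<ge> 0" for x using assms unfolding g_def by auto
  have gm: "g \<in> borel_measurable borel" unfolding g_def by measurable
  have m1: "(\<lambda>x. ennreal (max 0 (x - k2))) \<in> borel_measurable \<mu>" by (rule meas) measurable
  have m2: "(\<lambda>x. ennreal (g x)) \<in> borel_measurable \<mu>" by (rule meas[OF gm])
  have split: "ennreal (max 0 (x - k1)) = ennreal (max 0 (x - k2)) + ennreal (g x)" for x
    proof -
    have "max 0 (x - k1) = max 0 (x - k2) + g x" by (simp add: g_def)
    then show ?thesis using g0[of x] by (simp add: ennreal_plus)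
  qed
  have "opt_cost k1 \<mu> = (\<integral>\<^sup>+ x. ennreal (max 0 (x - k2)) + ennreal (g x) \<partial>\<mu>)"
    unfolding opt_cost_def using split by simp
  also have "\<dots> = ennreal a + (\<integral>\<^sup>+ x. ennreal (g x) \<partial>\<mu>)"
    using nn_integral_add[OF m1 m2] fe by simp
  finally have c: "opt_cost k1 \<mu> = ennreal a + (\<integral>\<^sup>+ x. ennreal (g x) \<partial>\<mu>)" .
  show ?thesis
  proof (rule ccontr)
    assume "\<not> ennreal a < opt_cost k1 \<mu>"
    then have "ennreal a + (\<integral>\<^sup>+ x. ennreal (g x) \<partial>\<mu>) \<le> ennreal a" using c by simp
    then have G: "(\<integral>\<^sup>+ x. ennreal (g x) \<partial>\<mu>) = 0"
      using ennreal_add_left_cancel_le[of "ennreal a" "\<integral>\<^sup>+ x. ennreal (g x) \<partial>\<mu>" 0] by simp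
    have "AE x in \<mu>. ennreal (g x) = 0"
      using G by (subst (asm) nn_integral_0_iff_AE) (auto intro!: m2)
    then have "AE x in \<mu>. ennreal (max 0 (x - k2)) = 0"
    proof (rule AE_mp, intro AE_I2 impI)
      fix x assume "ennreal (g x) = 0"
      then have "g x = 0" using g0[of x] by simp
      then show "ennreal (max 0 (x - k2)) = 0" using assms unfolding g_def by (auto simp: max_def split: if_splits)
    qed
    then have "(\<integral>\<^sup>+ x. ennreal (max 0 (x - k2)) \<partial>\<mu>) = 0"
      using nn_integral_0_iff_AE[OF m1] by blast
    then show False using fe assms(3) by simp
  qed
qed

theorem proposition1:
  fixes k1 k2 a :: real
  assumes "0 \<le> k1" and "k1 < k2" and "a > 0"
  shows "(\<exists>\<mu>. opt_feasible k2 a \<mu>) \<and>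
         \<not> (\<exists>\<mu>. opt_feasible k2 a \<mu> \<and>
               opt_cost k1 \<mu> = (INF \<nu> \<in> {\<nu>. opt_feasible k2 a \<nu>}. opt_cost k1 \<nu>))"
proof
  show "\<exists>\<mu>. opt_feasible k2 a \<mu>" using twopt_feas[of 1 k2 a] assms by auto
  show "\<not> (\<exists>\<mu>. opt_feasible k2 a \<mu> \<and>
               opt_cost k1 \<mu> = (INF \<nu> \<in> {\<nu>. opt_feasible k2 a \<nu>}. opt_cost k1 \<nu>))"
  proof
    assume "\<exists>\<mu>. opt_feasible k2 a \<mu> \<and>
               opt_cost k1 \<mu> = (INF \<nu> \<in> {\<nu>. opt_feasible k2 a \<nu>}. opt_cost k1 \<nu>)"
    then obtain \<mu> where f: "opt_feasible k2 a \<mu>"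
      and eq: "opt_cost k1 \<mu> = (INF \<nu> \<in> {\<nu>. opt_feasible k2 a \<nu>}. opt_cost k1 \<nu>)" by blast
    have le: "opt_cost k1 \<mu> \<le> ennreal (a + p * (k2 - k1))" if "0 < p" "p \<le> 1" for p
    proof -
      have "opt_cost k1 \<mu> \<le> opt_cost k1 (twopt k2 a p)"
        unfolding eq using twopt_feas[of p k2 a] that assms by (intro INF_lower) auto
      then show ?thesis using twopt_cost[of p k1 k2 a] that assms by simp
    qed
    have gt: "ennreal a < opt_cost k1 \<mu>" using feas_cost_gt assms f by blast
    show False
    proof (cases "opt_cost k1 \<mu> = \<infinity>")
      case True
      then show ?thesis using le[of 1] by (simp add: top_unique)
    next
      case False
      then obtain c where c: "opt_cost k1 \<mu> = ennreal c" "c \<ge> 0" by (cases "opt_cost k1 \<mu>") auto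
      have ca: "a < c" using gt c by (metis ennreal_leI not_less)
      define p where "p = min 1 ((c - a) / (2 * (k2 - k1)))"
      have p0: "0 < p" "p \<le> 1" using ca assms unfolding p_def by auto
      have "p * (k2 - k1) \<le> (c - a) / (2 * (k2 - k1)) * (k2 - k1)"
        unfolding p_def using assms by (intro mult_right_mono) auto
      also have "\<dots> = (c - a) / 2" using assms by (simp add: field_simps)
      finally have "a + p * (k2 - k1) < c" using ca by simp
      moreover have "ennreal c \<le> ennreal (a + p * (k2 - k1))" using le[OF p0] c by simp
      moreover have "a + p * (k2 - k1) \<ge> 0" using p0 assms by simp
      ultimately show False by (simp add: ennreal_le_iff)
    qed
  qed
qed

end
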